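(* Let $A\in M_n(\mathbb{R})$ be nilpotent and let $\epsilon>0$. Then for every multiset $\Lambda=\{\lambda_1,\ldots,\lambda_n\}$ of complex numbers that is invariant under complex conjugation and satisfies $\sum_{i=1}^n|\lambda_i|^2<\epsilon^2$, there exists $M\in M_n(\mathbb{R})$ with $\|M-A\|<\epsilon$ and $\operatorname{spec}(M)=\Lambda$.
   Context: $M_n(\mathbb{R})$ is the set of real $n\times n$ matrices, $\|\cdot\|$ the Frobenius norm, and $\operatorname{spec}$ the spectrum as a multiset. *)

theory Defs
  imports "Jordan_Normal_Form.Char_Poly"
begin

definition nilpotent_mat :: "'a :: comm_ring_1 mat \<Rightarrow> bool" where
  "nilpotent_mat A \<longleftrightarrow> A \<in> carrier_mat (dim_row A) (dim_row A) \<and>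
     (\<exists>k. A ^\<^sub>m k = 0\<^sub>m (dim_row A) (dim_row A))"

definition frob_norm :: "real mat \<Rightarrow> real" where
  "frob_norm M = sqrt (\<Sum>i<dim_row M. \<Sum>j<dim_col M. (M $$ (i,j))^2)"

definition has_spectrum :: "real mat \<Rightarrow> complex multiset \<Rightarrow> bool" where
  "has_spectrum M \<Lambda> \<longleftrightarrow>
     char_poly (map_mat complex_of_real M) = (\<Prod>a\<in>#\<Lambda>. [:- a, 1:])"

end

theory Submission
  imports Defs "Jordan_Normal_Form.Schur_Decomposition"
begin


lemma conj_real_vec[simp]: "conjugate (w :: real vec) = w"
  by (rule eq_vecI) auto

lemma onb_exists:
  fixes v :: "real vec"
  assumes v: "v \<in> carrier_vec n" and v0: "v \<noteq> 0\<^sub>v n"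
  shows "\<exists>Q \<in> carrier_mat n n. transpose_mat Q * Q = 1\<^sub>m n \<and> Q * transpose_mat Q = 1\<^sub>m n
     \<and> (\<exists>c. col Q 0 = c \<cdot>\<^sub>v v)"
proof -
  interpret cof_vec_space n "TYPE(real)" .
  define b where "b = basis_completion v"
  from basis_completion[OF v v0, folded b_def]
  have dist_b: "distinct b" and indep: "\<not> lin_dep (set b)" and b: "set b \<subseteq> carrier_vec n"
    and hdb: "hd b = v" and len_b: "length b = n" by auto
  have n: "n \<noteq> 0" using v v0 by auto
  from hdb len_b n obtain vs where bv: "b = v # vs" by (cases b, auto)
  define ws where "ws = gram_schmidt n b"
  from gram_schmidt_result[OF b dist_b indep refl, folded ws_def]
  have ws: "set ws \<subseteq> carrier_vec n" "corthogonal ws" "length ws = n" 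
    by (auto simp: len_b)
  from gram_schmidt_hd[OF v, of vs, folded bv] have hdws: "hd ws = v" unfolding ws_def .
  define us where "us = map (\<lambda>w. (1 / sqrt (w \<bullet> w)) \<cdot>\<^sub>v w) ws"
  define Q where "Q = mat_of_cols n us"
  have wsi: "ws ! i \<in> carrier_vec n" if "i < n" for i using ws that by auto
  have orth: "ws ! i \<bullet> ws ! j = (if i = j then ws ! i \<bullet> ws ! i else 0)" if "i < n" "j < n" for i j
    using corthogonalD[OF ws(2), of i j] that ws(3) by auto
  have pos: "ws ! i \<bullet> ws ! i > 0" if "i < n" for i
  proof -
    have "ws ! i \<bullet> ws ! i \<noteq> 0" using corthogonalD[OF ws(2), of i i] that ws(3) by auto
    moreover have "ws ! i \<bullet> ws ! i \<ge> 0" using wsi[OF that]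
      by (auto simp: scalar_prod_def intro!: sum_nonneg)
    ultimately show ?thesis by linarith
  qed
  have Q: "Q \<in> carrier_mat n n" unfolding Q_def carrier_mat_def using ws(3) by (simp add: us_def)
  have colQ: "col Q i = us ! i" if "i < n" for i
    unfolding Q_def using that ws wsi by (auto simp: us_def)
  have TQ: "transpose_mat Q * Q = 1\<^sub>m n"
  proof (rule eq_matI)
    fix i j assume i: "i < dim_row (1\<^sub>m n :: real mat)" and j: "j < dim_col (1\<^sub>m n :: real mat)"
    hence i: "i < n" and j: "j < n" by auto
    have "(transpose_mat Q * Q) $$ (i, j) = col Q i \<bullet> col Q j"
      using Q i j by auto
    also have "\<dots> = (1 / sqrt (ws!i \<bullet> ws!i)) * (1 / sqrt (ws!j \<bullet> ws!j)) * (ws ! i \<bullet> ws ! j)"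
      unfolding colQ[OF i] colQ[OF j] using i j ws wsi[OF i] wsi[OF j]
      by (simp add: us_def scalar_prod_smult_distrib smult_scalar_prod_distrib)
    also have "\<dots> = 1\<^sub>m n $$ (i, j)"
      using pos[OF i] i j by (auto simp: orth[OF i j] real_sqrt_mult[symmetric]) 
    finally show "(transpose_mat Q * Q) $$ (i, j) = 1\<^sub>m n $$ (i, j)" .
  qed (use Q in auto)
  have QT: "Q * transpose_mat Q = 1\<^sub>m n"
    using mat_mult_left_right_inverse[OF _ Q TQ] Q by auto
  have "col Q 0 = (1 / sqrt (v \<bullet> v)) \<cdot>\<^sub>v v"
  proof -
    have "ws ! 0 = v" using hdws n ws(3) by (metis hd_conv_nth list.size(3))
    thus ?thesis using colQ[of 0] n ws(3) by (simp add: us_def)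
  qed
  thus ?thesis using Q TQ QT by blast
qed

definition sut :: "real mat \<Rightarrow> nat \<Rightarrow> bool" where
  "sut T n \<longleftrightarrow> T \<in> carrier_mat n n \<and> (\<forall>i<n. \<forall>j<n. j \<le> i \<longrightarrow> T $$ (i,j) = 0)"

lemma char_poly_1x1: "B \<in> carrier_mat 1 1 \<Longrightarrow> char_poly B = [:- (B $$ (0,0)), 1:]"
proof -
  assume B: "B \<in> carrier_mat 1 1"
  have "char_poly B = (\<Prod>a\<leftarrow>diag_mat B. [:- a, 1:])"
    by (rule char_poly_upper_triangular[OF B]) (use B in auto)
  also have "diag_mat B = [B $$ (0,0)]" using B by (auto simp: diag_mat_def)
  finally show ?thesis by simp
qed

lemma orth_triang:
  fixes A :: "real mat"
  assumes "A \<in> carrier_mat n n" "char_poly A = [:0,1:]^n"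
  shows "\<exists>Q\<in>carrier_mat n n. transpose_mat Q * Q = 1\<^sub>m n \<and> Q * transpose_mat Q = 1\<^sub>m n
          \<and> sut (transpose_mat Q * A * Q) n"
  using assms
proof (induction n arbitrary: A)
  case 0
  show ?case by (rule bexI[of _ "1\<^sub>m 0"]) (use 0 in \<open>auto simp: sut_def\<close>)
next
  case (Suc m)
  note A = Suc.prems(1)
  have "poly (char_poly A) 0 = 0" using Suc.prems(2) by simp
  hence ev: "eigenvalue A 0" using eigenvalue_root_char_poly[OF A] by simp
  define v where "v = find_eigenvector A 0"
  from find_eigenvector[OF A ev] have "eigenvector A v 0" unfolding v_def .
  hence v: "v \<in> carrier_vec (Suc m)" and v0: "v \<noteq> 0\<^sub>v (Suc m)" and Av: "A *\<^sub>v v = 0\<^sub>v (Suc m)"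
    using A unfolding eigenvector_def by auto
  from onb_exists[OF v v0] obtain Q1 c where Q1: "Q1 \<in> carrier_mat (Suc m) (Suc m)"
    and Q1o: "transpose_mat Q1 * Q1 = 1\<^sub>m (Suc m)" "Q1 * transpose_mat Q1 = 1\<^sub>m (Suc m)"
    and cQ: "col Q1 0 = c \<cdot>\<^sub>v v" by blast
  define A1 where "A1 = transpose_mat Q1 * A * Q1"
  have A1: "A1 \<in> carrier_mat (Suc m) (Suc m)" unfolding A1_def using Q1 A by auto
  have col0: "A1 $$ (i, 0) = 0" if "i < Suc m" for i
  proof -
    have "A1 $$ (i,0) = row (transpose_mat Q1) i \<bullet> col (A * Q1) 0"
      unfolding A1_def using Q1 A that by (simp add: assoc_mult_mat[of _ _ "Suc m" _ "Suc m" _ "Suc m"])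
    also have "col (A * Q1) 0 = A *\<^sub>v col Q1 0" using A Q1 by auto
    also have "\<dots> = c \<cdot>\<^sub>v (A *\<^sub>v v)" unfolding cQ using A v by auto
    also have "\<dots> = 0\<^sub>v (Suc m)" using Av by auto
    finally show ?thesis using Q1 that by auto
  qed
  have simA: "similar_mat A A1"
    unfolding similar_mat_def
  proof (intro exI)
    show "similar_mat_wit A A1 Q1 (transpose_mat Q1)"
    proof (rule similar_mat_witI[OF Q1o(2) Q1o(1) _ A A1 Q1])
      have "Q1 * A1 * transpose_mat Q1 = (Q1 * transpose_mat Q1) * A * (Q1 * transpose_mat Q1)"
        unfolding A1_def using Q1 A
        by (simp add: assoc_mult_mat[of _ "Suc m" "Suc m" _ "Suc m" _ "Suc m"])
      thus "A = Q1 * A1 * transpose_mat Q1" using Q1o A by simp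
      show "transpose_mat Q1 \<in> carrier_mat (Suc m) (Suc m)" using Q1 by auto
    qed
  qed
  obtain B1 B2 B3 B4 where sb: "split_block A1 1 1 = (B1,B2,B3,B4)" by (metis prod_cases4)
  have dims: "dim_row A1 = 1 + m" "dim_col A1 = 1 + m" using A1 by auto
  note spl = split_block[OF sb dims]
  have B3: "B3 = 0\<^sub>m m 1" using sb col0 A1 unfolding split_block_def Let_def by (auto intro!: eq_matI)
  have B1: "B1 = 0\<^sub>m 1 1" using sb col0 A1 unfolding split_block_def Let_def by (auto intro!: eq_matI)
  have "char_poly A1 = char_poly B1 * char_poly B4"
    unfolding spl(5) B3 by (rule char_poly_four_block_zeros_col[OF spl(1,2,4)])
  also have "char_poly B1 = [:0,1:]" unfolding B1 by (subst char_poly_1x1) auto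
  finally have "[:0,1:] * [:0,1:]^m = [:0,1:] * char_poly B4"
    using Suc.prems(2) char_poly_similar[OF simA] by simp
  hence cpB4: "char_poly B4 = [:0,1:]^m" by (metis mult_cancel_left pCons_eq_0_iff zero_neq_one)
  from Suc.IH[OF spl(4) cpB4] obtain Q4 where Q4: "Q4 \<in> carrier_mat m m"
    and Q4o: "transpose_mat Q4 * Q4 = 1\<^sub>m m" "Q4 * transpose_mat Q4 = 1\<^sub>m m"
    and sut4: "sut (transpose_mat Q4 * B4 * Q4) m" by blast
  define D where "D = four_block_mat (1\<^sub>m 1) (0\<^sub>m 1 m) (0\<^sub>m m 1) Q4"
  have D: "D \<in> carrier_mat (Suc m) (Suc m)" unfolding D_def using Q4 by auto
  have DT: "transpose_mat D = four_block_mat (1\<^sub>m 1) (0\<^sub>m 1 m) (0\<^sub>m m 1) (transpose_mat Q4)"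
    unfolding D_def using Q4 by (subst transpose_four_block_mat) auto
  have Do1: "transpose_mat D * D = 1\<^sub>m (Suc m)" unfolding DT unfolding D_def using Q4 Q4o
    by (subst mult_four_block_mat[of _ 1 1 _ m _ m _ _ 1 _ m]) auto
  have Do2: "D * transpose_mat D = 1\<^sub>m (Suc m)" unfolding DT unfolding D_def using Q4 Q4o
    by (subst mult_four_block_mat[of _ 1 1 _ m _ m _ _ 1 _ m]) auto
  define Q where "Q = Q1 * D"
  have Q: "Q \<in> carrier_mat (Suc m) (Suc m)" unfolding Q_def using Q1 D by auto
  have tQ: "transpose_mat Q = transpose_mat D * transpose_mat Q1" unfolding Q_def
    using Q1 D by (simp add: transpose_mult)
  have "transpose_mat Q * Q = transpose_mat D * (transpose_mat Q1 * Q1) * D" unfolding tQ unfolding Q_def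
    using Q1 D by (simp add: assoc_mult_mat[of _ "Suc m" "Suc m" _ "Suc m" _ "Suc m"])
  hence Qo1: "transpose_mat Q * Q = 1\<^sub>m (Suc m)" using Q1o Do1 D by simp
  have "Q * transpose_mat Q = Q1 * (D * transpose_mat D) * transpose_mat Q1" unfolding tQ unfolding Q_def
    using Q1 D by (simp add: assoc_mult_mat[of _ "Suc m" "Suc m" _ "Suc m" _ "Suc m"])
  hence Qo2: "Q * transpose_mat Q = 1\<^sub>m (Suc m)" using Q1o Do2 Q1 by simp
  have "transpose_mat Q * A * Q = transpose_mat D * A1 * D"
    unfolding tQ unfolding Q_def A1_def using Q1 D A
    by (simp add: assoc_mult_mat[of _ "Suc m" "Suc m" _ "Suc m" _ "Suc m"])
  also have "\<dots> = four_block_mat B1 (B2 * Q4) (0\<^sub>m m 1) (transpose_mat Q4 * B4 * Q4)"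
  proof -
    have "transpose_mat D * A1 = four_block_mat B1 B2 (0\<^sub>m m 1) (transpose_mat Q4 * B4)"
      unfolding DT spl(5) B3 using Q4 spl(1,2,4)
      by (subst mult_four_block_mat[of _ 1 1 _ m _ m _ _ 1 _ m]) auto
    also have "\<dots> * D = four_block_mat B1 (B2 * Q4) (0\<^sub>m m 1) (transpose_mat Q4 * B4 * Q4)"
      unfolding D_def using Q4 spl(1,2,4)
      by (subst mult_four_block_mat[of _ 1 1 _ m _ m _ _ 1 _ m]) auto
    finally show ?thesis .
  qed
  finally have eq: "transpose_mat Q * A * Q = four_block_mat B1 (B2 * Q4) (0\<^sub>m m 1) (transpose_mat Q4 * B4 * Q4)" .
  have "sut (transpose_mat Q * A * Q) (Suc m)"
    unfolding sut_def
  proof (intro conjI allI impI)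
    show "transpose_mat Q * A * Q \<in> carrier_mat (Suc m) (Suc m)" using Q A by auto
    fix i j assume i: "i < Suc m" and j: "j < Suc m" and ji: "j \<le> i"
    show "(transpose_mat Q * A * Q) $$ (i, j) = 0"
      unfolding eq using i j ji spl(1,2,4) Q4 sut4 B1 unfolding sut_def
      by (auto simp: less_Suc_eq_0_disj)
  qed
  thus ?case using Q Qo1 Qo2 by blast
qed



definition frobsq :: "real mat \<Rightarrow> real" where
  "frobsq X = (\<Sum>i<dim_row X. \<Sum>j<dim_col X. (X $$ (i,j))^2)"

lemma frobsq_cols: "X \<in> carrier_mat n m \<Longrightarrow> frobsq X = (\<Sum>j<m. col X j \<bullet> col X j)"
  unfolding frobsq_def scalar_prod_def
  by (auto simp: power2_eq_square atLeast0LessThan intro: sum.swap)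

lemma frobsq_transpose: "frobsq (transpose_mat X) = frobsq X"
  unfolding frobsq_def by (auto intro: sum.swap)

lemma frobsq_orth_left:
  assumes Q: "Q \<in> carrier_mat n n" and Qo: "transpose_mat Q * Q = 1\<^sub>m n" and X: "X \<in> carrier_mat n m"
  shows "frobsq (Q * X) = frobsq X"
proof -
  have "frobsq (Q * X) = (\<Sum>j<m. col (Q*X) j \<bullet> col (Q*X) j)"
    using Q X by (intro frobsq_cols) auto
  also have "\<dots> = (\<Sum>j<m. col X j \<bullet> col X j)"
  proof (rule sum.cong[OF refl])
    fix j assume "j \<in> {..<m}"
    hence j: "j < m" by auto
    have c: "col X j \<in> carrier_vec n" using X j by auto
    have "col (Q*X) j \<bullet> col (Q*X) j = (Q *\<^sub>v col X j) \<bullet> (Q *\<^sub>v col X j)"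
      unfolding col_mult2[OF Q X j] ..
    also have "\<dots> = (transpose_mat Q *\<^sub>v (Q *\<^sub>v col X j)) \<bullet> col X j"
      by (rule transpose_vec_mult_scalar[symmetric, OF Q c]) (use Q c in auto)
    also have "transpose_mat Q *\<^sub>v (Q *\<^sub>v col X j) = (transpose_mat Q * Q) *\<^sub>v col X j"
      using Q c by (subst assoc_mult_mat_vec) auto
    also have "\<dots> = col X j" using Qo c by simp
    finally show "col (Q*X) j \<bullet> col (Q*X) j = col X j \<bullet> col X j" .
  qed
  also have "\<dots> = frobsq X" using X by (intro frobsq_cols[symmetric]) auto
  finally show ?thesis .
qed

lemma frobsq_orth_conj:
  assumes Q: "Q \<in> carrier_mat n n" and Qo: "transpose_mat Q * Q = 1\<^sub>m n" and E: "E \<in> carrier_mat n n"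
  shows "frobsq (Q * E * transpose_mat Q) = frobsq E"
proof -
  have "frobsq (Q * E * transpose_mat Q) = frobsq (Q * (E * transpose_mat Q))"
    using Q E by (subst assoc_mult_mat) auto
  also have "\<dots> = frobsq (E * transpose_mat Q)"
    by (rule frobsq_orth_left[OF Q Qo]) (use Q E in auto)
  also have "\<dots> = frobsq (transpose_mat (E * transpose_mat Q))" by (simp add: frobsq_transpose)
  also have "transpose_mat (E * transpose_mat Q) = Q * transpose_mat E"
    using Q E by (simp add: transpose_mult)
  also have "frobsq \<dots> = frobsq (transpose_mat E)"
    by (rule frobsq_orth_left[OF Q Qo]) (use E in auto)
  finally show ?thesis by (simp add: frobsq_transpose)
qed

lemma det_1x1: "B \<in> carrier_mat 1 1 \<Longrightarrow> det B = B $$ (0,0)"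
  by (subst det_upper_triangular[of B 1]) (auto simp: diag_mat_def)

lemma det_2x2:
  assumes A: "(A :: 'a :: comm_ring_1 mat) \<in> carrier_mat 2 2"
  shows "det A = A $$ (0,0) * A $$ (1,1) - A $$ (1,0) * A $$ (0,1)"
proof -
  have "det A = (\<Sum>i<2. A $$ (i,0) * cofactor A i 0)"
    by (rule laplace_expansion_column[OF A]) auto
  also have "\<dots> = A $$ (0,0) * cofactor A 0 0 + A $$ (1,0) * cofactor A 1 0"
    by (simp add: numeral_2_eq_2)
  also have "cofactor A 0 0 = A $$ (1,1)" unfolding cofactor_def
    using A by (subst det_1x1) (auto simp: mat_delete_def)
  also have "cofactor A 1 0 = - A $$ (0,1)" unfolding cofactor_def
    using A by (subst det_1x1) (auto simp: mat_delete_def)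
  finally show ?thesis by (simp add: algebra_simps)
qed

lemma char_poly_2x2:
  assumes A: "(A :: 'a :: comm_ring_1 mat) \<in> carrier_mat 2 2"
  shows "char_poly A = [:- A $$ (0,0), 1:] * [:- A $$ (1,1), 1:] - [:A $$ (1,0) * A $$ (0,1):]"
  unfolding char_poly_def
  by (subst det_2x2) (use A in \<open>auto simp: char_poly_matrix_def\<close>)



lemma sum_split_add: fixes f :: "nat \<Rightarrow> 'a::comm_monoid_add" shows "(\<Sum>i<k+m. f i) = (\<Sum>i<k. f i) + (\<Sum>i<m. f (k+i))"
  by (induction m arbitrary: f) (auto simp: add.assoc)

lemma frobsq_four_block:
  assumes E1: "E1 \<in> carrier_mat k k" and E4: "E4 \<in> carrier_mat m m"
  shows "frobsq (four_block_mat E1 (0\<^sub>m k m) (0\<^sub>m m k) E4) = frobsq E1 + frobsq E4"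
  using E1 E4 unfolding frobsq_def
  by (simp add: sum_split_add sum.distrib)

lemma char_poly_four_block_zeros:
  fixes A1 :: "'a :: idom mat"
  assumes A1: "A1 \<in> carrier_mat k k"
  and A2: "A2 \<in> carrier_mat k n" and A3: "A3 \<in> carrier_mat n n"
  shows "char_poly (four_block_mat A1 A2 (0\<^sub>m n k) A3) = char_poly A1 * char_poly A3" 
proof -
  let ?cm = "\<lambda> A. [:0, 1:] \<cdot>\<^sub>m 1\<^sub>m (dim_row A) +
         map_mat (\<lambda>a. [:- a:]) A"
  let ?B2 = "map_mat (\<lambda>a. [:- a:]) A2"
  have "char_poly (four_block_mat A1 A2 (0\<^sub>m n k) A3) = det (?cm (four_block_mat A1 A2 (0\<^sub>m n k) A3))"
    unfolding char_poly_defs using A1 A3 by simp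
  also have "?cm (four_block_mat A1 A2 (0\<^sub>m n k) A3) = four_block_mat (?cm A1) ?B2 (0\<^sub>m n k) (?cm A3)"
    by (rule eq_matI, insert A1 A2 A3, auto simp: one_poly_def)
  also have "det \<dots> = det (?cm A1) * det (?cm A3)"
    by (rule det_four_block_mat_lower_left_zero[OF _ _ refl], insert A1 A2 A3, auto)
  also have "\<dots> = char_poly A1 * char_poly A3" unfolding char_poly_defs ..
  finally show ?thesis .
qed

lemma sut_split:
  assumes B: "sut B (k+m)" and sb: "split_block B k k = (B1,B2,B3,B4)"
  shows "B1 \<in> carrier_mat k k" "B2 \<in> carrier_mat k m" "B4 \<in> carrier_mat m m"
    "B3 = 0\<^sub>m m k" "B = four_block_mat B1 B2 B3 B4" "sut B1 k" "sut B4 m"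
proof -
  have Bc: "B \<in> carrier_mat (k+m) (k+m)" using B unfolding sut_def by auto
  have dims: "dim_row B = k + m" "dim_col B = k + m" using Bc by auto
  note spl = split_block[OF sb dims]
  show "B1 \<in> carrier_mat k k" "B2 \<in> carrier_mat k m" "B4 \<in> carrier_mat m m"
    "B = four_block_mat B1 B2 B3 B4" using spl by auto
  show "B3 = 0\<^sub>m m k" using sb B dims unfolding split_block_def Let_def sut_def
    by (auto intro!: eq_matI)
  show "sut B1 k" using sb B dims unfolding split_block_def Let_def sut_def
    by auto
  show "sut B4 m" using sb B dims unfolding split_block_def Let_def sut_def
    by auto
qed

lemma block_step:
  assumes B: "sut B (k+m)" and sb: "split_block B k k = (B1,B2,B3,B4)"
    and E1: "E1 \<in> carrier_mat k k" and E4: "E4 \<in> carrier_mat m m"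
  defines "E \<equiv> four_block_mat E1 (0\<^sub>m k m) (0\<^sub>m m k) E4"
  shows "E \<in> carrier_mat (k+m) (k+m)" "frobsq E = frobsq E1 + frobsq E4"
    "char_poly (map_mat complex_of_real (B + E)) =
       char_poly (map_mat complex_of_real (B1 + E1)) * char_poly (map_mat complex_of_real (B4 + E4))"
proof -
  note s = sut_split[OF B sb]
  show "E \<in> carrier_mat (k+m) (k+m)" unfolding E_def using E1 E4 by auto
  show "frobsq E = frobsq E1 + frobsq E4" unfolding E_def by (rule frobsq_four_block[OF E1 E4])
  have "B + E = four_block_mat (B1 + E1) B2 (0\<^sub>m m k) (B4 + E4)"
    unfolding s(5) E_def s(4) using s(1-3) E1 E4
    by (subst add_four_block_mat[of _ k k _ m _ m]) auto
  hence "map_mat complex_of_real (B + E) = four_block_mat (map_mat complex_of_real (B1 + E1))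
     (map_mat complex_of_real B2) (0\<^sub>m m k) (map_mat complex_of_real (B4 + E4))"
    using s(1-3) E1 E4 by (auto intro!: eq_matI)
  thus "char_poly (map_mat complex_of_real (B + E)) =
       char_poly (map_mat complex_of_real (B1 + E1)) * char_poly (map_mat complex_of_real (B4 + E4))"
    using s(1-3) E1 E4 by (simp add: char_poly_four_block_zeros[of _ k _ m])
qed



lemma char_poly_0x0: "(A :: 'a :: field mat) \<in> carrier_mat 0 0 \<Longrightarrow> char_poly A = 1"
  by (subst char_poly_upper_triangular[of A 0]) (auto simp: diag_mat_def)

lemma choose_s:
  fixes t b :: real assumes b: "b \<noteq> 0"
  shows "\<exists>s. s \<noteq> 0 \<and> (s - t)^2 + (b^2/s)^2 \<le> 2 * b^2"
proof (cases "\<bar>t\<bar> \<ge> \<bar>b\<bar>")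
  case True
  have t0: "t \<noteq> 0" using True b by auto
  have "b^2 \<le> t^2" using True by (metis abs_le_square_iff)
  hence "b^2 / t^2 \<le> 1" using t0 by simp
  hence "(b^2/t)^2 = b^2 * (b^2/t^2)" by (simp add: power2_eq_square)
  also have "\<dots> \<le> b^2 * 1" using \<open>b^2 / t^2 \<le> 1\<close> by (intro mult_left_mono) auto
  also have "\<dots> = b^2" by simp
  finally show ?thesis using t0 by (intro exI[of _ t]) (auto intro: order_trans)
next
  case False
  define s where "s = (if t \<ge> 0 then \<bar>b\<bar> else - \<bar>b\<bar>)"
  have s0: "s \<noteq> 0" using b by (auto simp: s_def)
  have s2: "s^2 = b^2" by (auto simp: s_def)
  have "(s - t)^2 \<le> b^2" using False by (auto simp: s_def abs_le_square_iff[symmetric] abs_if)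
  moreover have "(b^2/s)^2 = b^2" using s2 s0 b by (simp add: power_divide power2_eq_square)
  ultimately show ?thesis using s0 by (intro exI[of _ s]) auto
qed

lemma perturb:
  "\<forall>B \<Lambda>. sut B n \<longrightarrow> size \<Lambda> = n \<longrightarrow> image_mset cnj \<Lambda> = \<Lambda> \<longrightarrow>
     (\<exists>E\<in>carrier_mat n n. frobsq E \<le> (\<Sum>z\<in>#\<Lambda>. (cmod z)^2) \<and>
        char_poly (map_mat complex_of_real (B + E)) = (\<Prod>a\<in>#\<Lambda>. [:-a,1:]))"
proof (induction n rule: less_induct)
  case (less n)
  show ?case
  proof (intro allI impI)
    fix B and \<Lambda> :: "complex multiset"
    assume B: "sut B n" and sz: "size \<Lambda> = n" and inv: "image_mset cnj \<Lambda> = \<Lambda>"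
    have Bc: "B \<in> carrier_mat n n" using B by (auto simp: sut_def)
    show "\<exists>E\<in>carrier_mat n n. frobsq E \<le> (\<Sum>z\<in>#\<Lambda>. (cmod z)^2) \<and>
        char_poly (map_mat complex_of_real (B + E)) = (\<Prod>a\<in>#\<Lambda>. [:-a,1:])"
    proof (cases "\<Lambda> = {#}")
      case True
      hence n: "n = 0" using sz by auto
      show ?thesis using True Bc n
        by (intro bexI[of _ "0\<^sub>m 0 0"]) (auto simp: frobsq_def intro!: char_poly_0x0)
    next
      case False
      then obtain l where l: "l \<in># \<Lambda>" by blast
      show ?thesis
      proof (cases "Im l = 0")
        case True
        define L1 where "L1 = \<Lambda> - {#l#}"
        have Ld: "\<Lambda> = add_mset l L1" using l unfolding L1_def by simp
        have cl: "cnj l = l" using True by (simp add: complex_eq_iff)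
        have inv1: "image_mset cnj L1 = L1" using inv unfolding Ld using cl by simp
        obtain m where nm: "n = 1 + m" and sz1: "size L1 = m" using sz Ld by auto
        obtain B1 B2 B3 B4 where sb: "split_block B 1 1 = (B1,B2,B3,B4)" by (metis prod_cases4)
        note s = sut_split[OF B[unfolded nm] sb]
        from less.IH[of m] nm s(7) sz1 inv1 obtain E4 where E4: "E4 \<in> carrier_mat m m"
          and fE4: "frobsq E4 \<le> (\<Sum>z\<in>#L1. (cmod z)^2)"
          and cE4: "char_poly (map_mat complex_of_real (B4 + E4)) = (\<Prod>a\<in>#L1. [:-a,1:])" by auto
        define E1 where "E1 = mat 1 1 (\<lambda>_. Re l)"
        have E1: "E1 \<in> carrier_mat 1 1" by (simp add: E1_def)
        note bs = block_step[OF B[unfolded nm] sb E1 E4]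
        have B10: "B1 $$ (0,0) = 0" using s(6) by (auto simp: sut_def)
        have "char_poly (map_mat complex_of_real (B1 + E1)) = [:-l,1:]"
          using E1 s(1) B10 by (subst char_poly_1x1) (auto simp: E1_def complex_eq_iff True)
        moreover have "frobsq E1 = (cmod l)^2"
          by (simp add: E1_def frobsq_def cmod_def True)
        ultimately show ?thesis using bs fE4 cE4 unfolding nm Ld
          by (intro bexI[OF _ bs(1)]) (auto)
      next
        case False
        define L1 where "L1 = \<Lambda> - {#l#}"
        have Ld1: "\<Lambda> = add_mset l L1" using l unfolding L1_def by simp
        have ncl: "cnj l \<noteq> l" using False by (simp add: complex_eq_iff)
        have "cnj l \<in># \<Lambda>" using l inv by (metis image_eqI set_image_mset)
        hence "cnj l \<in># L1" using ncl Ld1 by auto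
        define L2 where "L2 = L1 - {#cnj l#}"
        have Ld: "\<Lambda> = add_mset l (add_mset (cnj l) L2)" using \<open>cnj l \<in># L1\<close> Ld1 unfolding L2_def by simp
        have inv2: "image_mset cnj L2 = L2" using inv unfolding Ld by (simp add: add_mset_commute)
        obtain m where nm: "n = 2 + m" and sz2: "size L2 = m" using sz Ld by auto
        obtain B1 B2 B3 B4 where sb: "split_block B 2 2 = (B1,B2,B3,B4)" by (metis prod_cases4)
        note s = sut_split[OF B[unfolded nm] sb]
        from less.IH[of m] nm s(7) sz2 inv2 obtain E4 where E4: "E4 \<in> carrier_mat m m"
          and fE4: "frobsq E4 \<le> (\<Sum>z\<in>#L2. (cmod z)^2)"
          and cE4: "char_poly (map_mat complex_of_real (B4 + E4)) = (\<Prod>a\<in>#L2. [:-a,1:])" by auto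
        define a where "a = Re l"
        define b where "b = Im l"
        define t where "t = B1 $$ (0,1)"
        from choose_s[of b t] False obtain s where s0: "s \<noteq> 0"
          and sb2: "(s - t)^2 + (b^2/s)^2 \<le> 2 * b^2" unfolding b_def by auto
        define E1 where "E1 = mat 2 2 (\<lambda>(i,j). if i = j then a else if i = 0 then s - t else - (b^2/s))"
        have E1: "E1 \<in> carrier_mat 2 2" by (simp add: E1_def)
        note bs = block_step[OF B[unfolded nm] sb E1 E4]
        have B1z: "B1 $$ (0,0) = 0" "B1 $$ (1,0) = 0" "B1 $$ (1,1) = 0" using s(6) by (auto simp: sut_def)
        let ?C = "map_mat complex_of_real (B1 + E1)"
        have C: "?C \<in> carrier_mat 2 2" using s(1) E1 by auto
        have "char_poly ?C = [:- ?C $$ (0,0), 1:] * [:- ?C $$ (1,1), 1:] - [:?C $$ (1,0) * ?C $$ (0,1):]"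
          by (rule char_poly_2x2[OF C])
        also have "\<dots> = [:- of_real a, 1:] * [:- of_real a, 1:] - [: - of_real (b^2/s) * of_real s:]"
          using s(1) E1 B1z by (simp add: E1_def t_def)
        also have "\<dots> = [:-l,1:] * [:-cnj l,1:]"
          using s0 by (simp add: a_def b_def complex_eq_iff power2_eq_square algebra_simps)
        finally have cp1: "char_poly ?C = [:-l,1:] * [:-cnj l,1:]" .
        have "frobsq E1 = a^2 + (s - t)^2 + (b^2/s)^2 + a^2"
          by (simp add: E1_def frobsq_def numeral_2_eq_2)
        also have "\<dots> \<le> (cmod l)^2 + (cmod (cnj l))^2"
          using sb2 by (simp add: cmod_def a_def b_def)
        finally have f1: "frobsq E1 \<le> (cmod l)^2 + (cmod (cnj l))^2" .
        show ?thesis using bs fE4 cE4 cp1 f1 unfolding nm Ld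
          by (intro bexI[OF _ bs(1)]) (auto simp: algebra_simps)
      qed
    qed
  qed
qed



lemma nilp_char_poly:
  fixes A :: "real mat"
  assumes A: "A \<in> carrier_mat n n" and nil: "nilpotent_mat A"
  shows "char_poly A = [:0,1:]^n"
proof -
  let ?C = "map_mat complex_of_real A"
  have C: "?C \<in> carrier_mat n n" using A by auto
  from nil A obtain k where Ak: "A ^\<^sub>m k = 0\<^sub>m n n" unfolding nilpotent_mat_def by auto
  have Ck: "?C ^\<^sub>m k = 0\<^sub>m n n"
  proof -
    have "map_mat complex_of_real (0\<^sub>m n n) = (0\<^sub>m n n :: complex mat)" by (rule eq_matI) auto
    moreover have "?C ^\<^sub>m k = map_mat complex_of_real (A ^\<^sub>m k)"
      by (rule of_real_hom.mat_hom_pow[OF A, symmetric])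
    ultimately show ?thesis unfolding Ak by simp
  qed
  from char_poly_factorized[OF C] obtain as where cpC: "char_poly ?C = (\<Prod>a\<leftarrow>as. [:- a, 1:])"
    and len: "length as = n" by auto
  have z: "a = 0" if "a \<in> set as" for a
  proof -
    have "poly (char_poly ?C) a = 0" unfolding cpC using that
      by (simp add: poly_prod_list prod_list_zero_iff)
    hence "eigenvalue ?C a" using eigenvalue_root_char_poly[OF C] by simp
    then obtain v where ev: "eigenvector ?C v a" unfolding eigenvalue_def by auto
    have "?C ^\<^sub>m k *\<^sub>v v = a^k \<cdot>\<^sub>v v" by (rule eigenvector_pow[OF C ev])
    moreover have "(0\<^sub>m n n :: complex mat) *\<^sub>v v = 0\<^sub>v n" using ev C unfolding eigenvector_def by (intro eq_vecI) (auto simp: scalar_prod_def)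
    ultimately have "a^k \<cdot>\<^sub>v v = 0\<^sub>v n" using Ck by auto
    moreover have "v \<noteq> 0\<^sub>v n" "v \<in> carrier_vec n" using ev C unfolding eigenvector_def by auto
    ultimately obtain i where i: "i < n" "v $ i \<noteq> 0" and kv: "a^k \<cdot>\<^sub>v v = 0\<^sub>v n"
      by (metis (no_types, lifting) carrier_vecD eq_vecI index_zero_vec(1,2))
    have "(a^k \<cdot>\<^sub>v v) $ i = 0" using kv i by simp
    hence "a^k = 0" using i \<open>v \<in> carrier_vec n\<close> by auto
    thus "a = 0" by simp
  qed
  have "as = replicate n 0" using z len by (simp add: list_eq_iff_nth_eq)
  hence "char_poly ?C = [:0,1:]^n" using cpC by simp
  moreover have "map_poly complex_of_real ([:0,1:]^n) = [:0,1:]^n"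
    by (induction n) (auto simp: map_poly_mult map_poly_pCons)
  moreover have "char_poly (map_mat complex_of_real A) = map_poly complex_of_real (char_poly A)"
    by (rule of_real_hom.char_poly_hom[OF A])
  ultimately have eq: "map_poly complex_of_real (char_poly A) = map_poly complex_of_real ([:0,1:]^n)"
    by simp
  show ?thesis
  proof (rule poly_eqI)
    fix i show "coeff (char_poly A) i = coeff ([:0,1:]^n) i"
      using arg_cong[OF eq, of "\<lambda>p. coeff p i"] by simp
  qed
qed



theorem corollary5p5:
  fixes A :: "real mat" and n :: nat and \<epsilon> :: real
  assumes "A \<in> carrier_mat n n"
    and "nilpotent_mat A"
    and "\<epsilon> > 0"
  shows "\<forall>\<Lambda> :: complex multiset.
           size \<Lambda> = n \<and> image_mset cnj \<Lambda> = \<Lambda> \<and>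
           (\<Sum>z\<in>#\<Lambda>. (cmod z)^2) < \<epsilon>^2 \<longrightarrow>
           (\<exists>M \<in> carrier_mat n n. frob_norm (M - A) < \<epsilon> \<and> has_spectrum M \<Lambda>)"
proof (intro allI impI)
  fix \<Lambda> :: "complex multiset"
  assume H: "size \<Lambda> = n \<and> image_mset cnj \<Lambda> = \<Lambda> \<and> (\<Sum>z\<in>#\<Lambda>. (cmod z)^2) < \<epsilon>^2"
  note A = assms(1)
  from orth_triang[OF A nilp_char_poly[OF A assms(2)]] obtain Q where Q: "Q \<in> carrier_mat n n"
    and Qo1: "transpose_mat Q * Q = 1\<^sub>m n" and Qo2: "Q * transpose_mat Q = 1\<^sub>m n"
    and sT: "sut (transpose_mat Q * A * Q) n" by blast
  define T where "T = transpose_mat Q * A * Q"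
  have T: "T \<in> carrier_mat n n" unfolding T_def using Q A by auto
  from perturb[of n] sT H obtain E where E: "E \<in> carrier_mat n n"
    and fE: "frobsq E \<le> (\<Sum>z\<in>#\<Lambda>. (cmod z)^2)"
    and cE: "char_poly (map_mat complex_of_real (T + E)) = (\<Prod>a\<in>#\<Lambda>. [:-a,1:])"
    unfolding T_def by blast
  define M where "M = Q * (T + E) * transpose_mat Q"
  have M: "M \<in> carrier_mat n n" unfolding M_def using Q T E by auto
  have QTQ: "Q * T * transpose_mat Q = A"
  proof -
    have "Q * T * transpose_mat Q = (Q * transpose_mat Q) * A * (Q * transpose_mat Q)"
      unfolding T_def using Q A by (simp add: assoc_mult_mat[of _ n n _ n _ n])
    thus ?thesis using Qo2 A by simp
  qed
  have MA: "M - A = Q * E * transpose_mat Q"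
  proof -
    have "M = Q * T * transpose_mat Q + Q * E * transpose_mat Q"
      unfolding M_def using Q T E
      by (simp add: mult_add_distrib_mat[of _ n n] add_mult_distrib_mat[of _ n n])
    thus ?thesis unfolding QTQ using A Q E by auto
  qed
  have "frob_norm (M - A) = sqrt (frobsq (M - A))" unfolding frob_norm_def frobsq_def ..
  also have "frobsq (M - A) = frobsq E" unfolding MA by (rule frobsq_orth_conj[OF Q Qo1 E])
  also have "sqrt (frobsq E) < sqrt (\<epsilon>^2)" using fE H by (intro real_sqrt_less_mono) auto
  also have "\<dots> = \<epsilon>" using assms(3) by simp
  finally have fn: "frob_norm (M - A) < \<epsilon>" .
  have sim: "similar_mat M (T + E)" unfolding similar_mat_def
    by (rule exI[of _ Q], rule exI[of _ "transpose_mat Q"], rule similar_mat_witI[OF Qo2 Qo1 M_def M])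
       (use Q T E in auto)
  have "char_poly (map_mat complex_of_real M) = map_poly complex_of_real (char_poly M)"
    by (rule of_real_hom.char_poly_hom[OF M])
  also have "char_poly M = char_poly (T + E)" by (rule char_poly_similar[OF sim])
  also have "map_poly complex_of_real (char_poly (T + E)) = char_poly (map_mat complex_of_real (T + E))"
    by (rule of_real_hom.char_poly_hom[symmetric]) (use T E in auto)
  finally have "has_spectrum M \<Lambda>" unfolding has_spectrum_def using cE by simp
  thus "\<exists>M \<in> carrier_mat n n. frob_norm (M - A) < \<epsilon> \<and> has_spectrum M \<Lambda>" using M fn by blast
qed

end
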